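(* Let $q$ be a self-join-free Boolean conjunctive query, let $q_0\subseteq q$, let $\mathbf{db}$ be a database, and let $\mathbf{o}$ be a garbage set for $q_0$ in $\mathbf{db}$. If $\mathbf{p}$ is the union of one or more blocks of $\mathbf{o}$, then $\mathbf{o}\setminus\mathbf{p}$ is a garbage set for $q_0$ in $\mathbf{db}\setminus\mathbf{p}$.
   Context: Every relation name has a signature $[n,k]$ ($1\le k\le n$; primary-key positions $1,\dots,k$) and a mode in $\{\mathsf{c},\mathsf{i}\}$. Facts are variable-free atoms; facts are key-equal if same relation name and same primary-key values. A database is a finite set of facts with no two distinct key-equal facts of mode $\mathsf{c}$, all of whose relation names occur in $q$. A block of a set of facts is a maximal subset of pairwise key-equal facts; the block of $A$ in $\mathbf{db}$ is the set of facts of $\mathbf{db}$ key-equal to $A$. A repair of a set of facts is a maximal subset without two distinct key-equal facts. A self-join-free Boolean conjunctive query is a finite set of atoms with distinct relation names; for a fact $A$, $\mathrm{atom}(A)$ is the atom of $q$ with the same relation name. A subset $\mathbf{o}\subseteq\mathbf{db}$ is a garbage set for $q_0$ in $\mathbf{db}$ if (1) for every $A\in\mathbf{o}$, $\mathrm{atom}(A)\in q_0$ and the block of $A$ in $\mathbf{db}$ is included in $\mathbf{o}$; and (2) there is a repair $\mathbf{r}$ of $\mathbf{o}$ such that for every valuation $\theta$ of the variables of $q$, if $\theta(q)\subseteq(\mathbf{db}\setminus\mathbf{o})\cup\mathbf{r}$ then $\theta(q_0)\cap\mathbf{r}=\emptyset$. *)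

theory Defs
  imports Main
begin

text \<open>Modes of relation names: c (consistent) and i (possibly inconsistent).\<close>
datatype mode = ModeC | ModeI

datatype ('v, 'c) trm = Var 'v | Cst 'c

text \<open>An atom is a relation name with a list of terms; a fact is a relation name
  with a list of constants. The signature sig R = (n, k) gives arity n and
  primary-key length k (key positions 1..k).\<close>
type_synonym ('r, 'v, 'c) atom = "'r \<times> ('v, 'c) trm list"
type_synonym ('r, 'c) fact = "'r \<times> 'c list"

definition wf_sig :: "('r \<Rightarrow> nat \<times> nat) \<Rightarrow> bool" where
  "wf_sig sig \<longleftrightarrow> (\<forall>R. 1 \<le> snd (sig R) \<and> snd (sig R) \<le> fst (sig R))"

definition key_equal :: "('r \<Rightarrow> nat \<times> nat) \<Rightarrow> ('r, 'c) fact \<Rightarrow> ('r, 'c) fact \<Rightarrow> bool" where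
  "key_equal sig A B \<longleftrightarrow> fst A = fst B \<and>
     take (snd (sig (fst A))) (snd A) = take (snd (sig (fst B))) (snd B)"

definition sjf_query :: "('r \<Rightarrow> nat \<times> nat) \<Rightarrow> ('r, 'v, 'c) atom set \<Rightarrow> bool" where
  "sjf_query sig q \<longleftrightarrow> finite q \<and> (\<forall>a\<in>q. \<forall>b\<in>q. fst a = fst b \<longrightarrow> a = b) \<and>
     (\<forall>a\<in>q. length (snd a) = fst (sig (fst a)))"

definition is_database ::
  "('r \<Rightarrow> nat \<times> nat) \<Rightarrow> ('r \<Rightarrow> mode) \<Rightarrow> ('r, 'v, 'c) atom set \<Rightarrow> ('r, 'c) fact set \<Rightarrow> bool" where
  "is_database sig md q db \<longleftrightarrow> finite db \<and>
     (\<forall>A\<in>db. length (snd A) = fst (sig (fst A)) \<and> fst A \<in> fst ` q) \<and>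
     (\<forall>A\<in>db. \<forall>B\<in>db. key_equal sig A B \<and> A \<noteq> B \<longrightarrow> md (fst A) \<noteq> ModeC)"

definition block_in :: "('r \<Rightarrow> nat \<times> nat) \<Rightarrow> ('r, 'c) fact \<Rightarrow> ('r, 'c) fact set \<Rightarrow> ('r, 'c) fact set" where
  "block_in sig A db = {B \<in> db. key_equal sig A B}"

definition is_block :: "('r \<Rightarrow> nat \<times> nat) \<Rightarrow> ('r, 'c) fact set \<Rightarrow> ('r, 'c) fact set \<Rightarrow> bool" where
  "is_block sig S B \<longleftrightarrow> B \<subseteq> S \<and> (\<forall>A\<in>B. \<forall>C\<in>B. key_equal sig A C) \<and>
     (\<forall>B'. B \<subseteq> B' \<and> B' \<subseteq> S \<and> (\<forall>A\<in>B'. \<forall>C\<in>B'. key_equal sig A C) \<longrightarrow> B' = B)"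

definition consistent :: "('r \<Rightarrow> nat \<times> nat) \<Rightarrow> ('r, 'c) fact set \<Rightarrow> bool" where
  "consistent sig S \<longleftrightarrow> (\<forall>A\<in>S. \<forall>B\<in>S. key_equal sig A B \<longrightarrow> A = B)"

definition is_repair :: "('r \<Rightarrow> nat \<times> nat) \<Rightarrow> ('r, 'c) fact set \<Rightarrow> ('r, 'c) fact set \<Rightarrow> bool" where
  "is_repair sig r S \<longleftrightarrow> r \<subseteq> S \<and> consistent sig r \<and>
     (\<forall>r'. r \<subseteq> r' \<and> r' \<subseteq> S \<and> consistent sig r' \<longrightarrow> r' = r)"

fun eval_trm :: "('v \<Rightarrow> 'c) \<Rightarrow> ('v, 'c) trm \<Rightarrow> 'c" where
  "eval_trm \<theta> (Var v) = \<theta> v"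
| "eval_trm \<theta> (Cst c) = c"

definition val_atom :: "('v \<Rightarrow> 'c) \<Rightarrow> ('r, 'v, 'c) atom \<Rightarrow> ('r, 'c) fact" where
  "val_atom \<theta> a = (fst a, map (eval_trm \<theta>) (snd a))"

definition atom_of :: "('r, 'v, 'c) atom set \<Rightarrow> ('r, 'c) fact \<Rightarrow> ('r, 'v, 'c) atom" where
  "atom_of q A = (THE a. a \<in> q \<and> fst a = fst A)"

definition garbage_set ::
  "('r \<Rightarrow> nat \<times> nat) \<Rightarrow> ('r, 'v, 'c) atom set \<Rightarrow> ('r, 'v, 'c) atom set \<Rightarrow>
   ('r, 'c) fact set \<Rightarrow> ('r, 'c) fact set \<Rightarrow> bool" where
  "garbage_set sig q q0 db obs \<longleftrightarrow> obs \<subseteq> db \<and>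
     (\<forall>A\<in>obs. atom_of q A \<in> q0 \<and> block_in sig A db \<subseteq> obs) \<and>
     (\<exists>r. is_repair sig r obs \<and>
        (\<forall>\<theta>. val_atom \<theta> ` q \<subseteq> (db - obs) \<union> r \<longrightarrow> val_atom \<theta> ` q0 \<inter> r = {}))"

end

theory Submission
  imports Defs
begin

lemma ke_refl: "key_equal sig A A" by (simp add: key_equal_def)
lemma ke_sym: "key_equal sig A B \<Longrightarrow> key_equal sig B A" by (auto simp add: key_equal_def)
lemma ke_trans: "key_equal sig A B \<Longrightarrow> key_equal sig B C \<Longrightarrow> key_equal sig A C"
  by (auto simp add: key_equal_def)

lemma block_closed:
  assumes "is_block sig obs B" "y \<in> B" "x \<in> obs" "key_equal sig x y"
  shows "x \<in> B"
proof -
  have "\<forall>A\<in>insert x B. \<forall>C\<in>insert x B. key_equal sig A C"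
    using assms unfolding is_block_def
    by (metis insert_iff ke_refl ke_sym ke_trans)
  moreover have "insert x B \<subseteq> obs" using assms unfolding is_block_def by auto
  ultimately have "insert x B = B" using assms(1) unfolding is_block_def
    by (metis subset_insertI)
  thus ?thesis by auto
qed

theorem lemma30:
  fixes sig :: "'r \<Rightarrow> nat \<times> nat" and md :: "'r \<Rightarrow> mode"
    and q q0 :: "('r, 'v, 'c) atom set"
    and db obs p :: "('r, 'c) fact set"
    and P :: "('r, 'c) fact set set"
  assumes "wf_sig sig"
    and "sjf_query sig q"
    and "q0 \<subseteq> q"
    and "is_database sig md q db"
    and "garbage_set sig q q0 db obs"
    and "P \<noteq> {}"
    and "\<forall>B\<in>P. is_block sig obs B"
    and "p = \<Union>P"
  shows "garbage_set sig q q0 (db - p) (obs - p)"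
proof -
  from assms(5) obtain r where sub: "obs \<subseteq> db"
    and blk: "\<forall>A\<in>obs. atom_of q A \<in> q0 \<and> block_in sig A db \<subseteq> obs"
    and rep: "is_repair sig r obs"
    and prp: "\<forall>\<theta>. val_atom \<theta> ` q \<subseteq> (db - obs) \<union> r \<longrightarrow> val_atom \<theta> ` q0 \<inter> r = {}"
    unfolding garbage_set_def by blast
  have pclosed: "x \<in> p" if "y \<in> p" "x \<in> obs" "key_equal sig x y" for x y
  proof -
    from that(1) assms(8) obtain B where "B \<in> P" "y \<in> B" by auto
    thus ?thesis using block_closed[of sig obs B y x] assms(7,8) that by auto
  qed
  have rep2: "is_repair sig (r - p) (obs - p)"
    unfolding is_repair_def
  proof (intro conjI allI impI)
    show "r - p \<subseteq> obs - p" using rep unfolding is_repair_def by auto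
    show "consistent sig (r - p)" using rep unfolding is_repair_def consistent_def by auto
    fix r'' assume h: "r - p \<subseteq> r'' \<and> r'' \<subseteq> obs - p \<and> consistent sig r''"
    show "r'' = r - p"
    proof (rule ccontr)
      assume "r'' \<noteq> r - p"
      then obtain x where x: "x \<in> r''" "x \<notin> r - p" using h by blast
      hence xo: "x \<in> obs" "x \<notin> p" "x \<notin> r" using h by auto
      have "\<not> consistent sig (insert x r)"
      proof
        assume "consistent sig (insert x r)"
        moreover have "insert x r \<subseteq> obs" using rep xo unfolding is_repair_def by auto
        ultimately have "insert x r = r" using rep unfolding is_repair_def by blast
        thus False using xo by auto
      qed
      then obtain y where y: "y \<in> r" "y \<noteq> x" "key_equal sig x y"
        using rep unfolding consistent_def is_repair_def by (metis insert_iff ke_sym)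
      have "y \<notin> p" using pclosed y xo by blast
      hence "y \<in> r''" using h y by auto
      thus False using h x y unfolding consistent_def by blast
    qed
  qed
  show ?thesis
    unfolding garbage_set_def
  proof (intro conjI ballI exI[of _ "r - p"])
    show "obs - p \<subseteq> db - p" using sub by auto
    fix A assume "A \<in> obs - p"
    thus "atom_of q A \<in> q0" using blk by auto
    show "block_in sig A (db - p) \<subseteq> obs - p" using blk \<open>A \<in> obs - p\<close>
      unfolding block_in_def by auto
  next
    show "is_repair sig (r - p) (obs - p)" by (rule rep2)
    show "\<forall>\<theta>. val_atom \<theta> ` q \<subseteq> (db - p - (obs - p)) \<union> (r - p) \<longrightarrow> val_atom \<theta> ` q0 \<inter> (r - p) = {}"
    proof (intro allI impI)
      fix \<theta> assume "val_atom \<theta> ` q \<subseteq> (db - p - (obs - p)) \<union> (r - p)"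
      hence "val_atom \<theta> ` q \<subseteq> (db - obs) \<union> r" by auto
      hence "val_atom \<theta> ` q0 \<inter> r = {}" using prp by blast
      thus "val_atom \<theta> ` q0 \<inter> (r - p) = {}" by blast
    qed
  qed
qed

end
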